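(* Let $q$ be a prime power, $m>4$, $V=\mathbb F_q^m$ with a fixed ordered basis, and $\mu=m-1$. There exists a $(\mu+1)$-dimensional subspace of $\bigwedge^2V$ containing exactly $(q^{\mu}-1)+q^2(q-1)$ decomposable vectors, and the remaining $(q^{\mu}-q^2)(q-1)$ nonzero elements of this subspace are of rank $4$.
   Context: A nonzero $\omega\in\bigwedge^2V$ is decomposable if $\omega=u\wedge v$ for some $u,v\in V$. With respect to the fixed basis $e_1,\dots,e_m$, let $\sigma:\bigwedge^2V\to\{m\times m\text{ skew-symmetric matrices}\}$ be the linear isomorphism with $\sigma(e_r\wedge e_s)=\mathbf e_r\mathbf e_s^t-\mathbf e_s\mathbf e_r^t$ ($r<s$, $\mathbf e_i$ standard column vectors); the rank of $\omega\in\bigwedge^2V$ is the rank of the matrix $\sigma(\omega)$. *)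

theory Defs
  imports "HOL-Analysis.Analysis"
begin

text \<open>V = F^m is modelled as 'a^'n with CARD('n) = m; the fixed ordered basis e_1..e_m
  is indexed by the linearly ordered finite type 'n.  The exterior square \<And>^2 V is modelled
  by its coordinates w.r.t. the basis e_r \<and> e_s (r < s): vectors in 'a^('n \<times> 'n) whose
  coordinates at pairs (r,s) with \<not> r < s vanish.\<close>

definition wedge2 :: "(('a::field) ^ (('n::{finite,linorder}) \<times> ('n::{finite,linorder}))) set" where
  "wedge2 = {w. \<forall>r s. \<not> r < s \<longrightarrow> w $ (r, s) = 0}"

definition wedge :: "('a::field) ^ ('n::{finite,linorder}) \<Rightarrow> ('a::field) ^ ('n::{finite,linorder}) \<Rightarrow> ('a::field) ^ (('n::{finite,linorder}) \<times> ('n::{finite,linorder}))" where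
  "wedge u v = (\<chi> p. if fst p < snd p
       then u $ fst p * v $ snd p - u $ snd p * v $ fst p else 0)"

definition decomposable :: "('a::field) ^ (('n::{finite,linorder}) \<times> ('n::{finite,linorder})) \<Rightarrow> bool" where
  "decomposable w \<longleftrightarrow> w \<noteq> 0 \<and> (\<exists>u v. w = wedge u v)"

definition sigma :: "('a::field) ^ (('n::{finite,linorder}) \<times> ('n::{finite,linorder})) \<Rightarrow> ('a::field) ^ ('n::{finite,linorder}) ^ ('n::{finite,linorder})" where
  "sigma w = (\<chi> i j. if i < j then w $ (i, j) else if j < i then - w $ (j, i) else 0)"

definition wrank :: "('a::field) ^ (('n::{finite,linorder}) \<times> ('n::{finite,linorder})) \<Rightarrow> nat" where
  "wrank w = rank (sigma w)"

end

theory Submission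
  imports Defs
begin


definition Zs :: "('n::finite \<times> 'n) set \<Rightarrow> ('a::field ^ ('n \<times> 'n)) set" where
  "Zs S = {w. \<forall>p. p \<notin> S \<longrightarrow> w $ p = 0}"

lemma card_Zs: "card (Zs S :: ('a::{finite,field} ^ ('n::finite \<times> 'n)) set) = CARD('a) ^ card S"
proof -
  let ?f = "\<lambda>w::'a ^ ('n \<times> 'n). restrict (\<lambda>p. w $ p) S"
  let ?g = "\<lambda>h. (\<chi> p. if p \<in> S then h p else 0) :: 'a ^ ('n \<times> 'n)"
  have "bij_betw ?f (Zs S) (PiE S (\<lambda>_. UNIV))"
    by (rule bij_betw_byWitness[where f'="?g"]) (auto simp: Zs_def vec_eq_iff PiE_def extensional_def)
  then have "card (Zs S :: ('a ^ ('n \<times> 'n)) set) = card (PiE S (\<lambda>_. UNIV :: 'a set))"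
    by (rule bij_betw_same_card)
  also have "\<dots> = CARD('a) ^ card S" by (simp add: card_PiE)
  finally show ?thesis .
qed

lemma subspace_Zs: "vec.subspace (Zs S)"
  by (auto simp: vec.subspace_def Zs_def)

lemma span_Zs: "Zs S = vec.span ((\<lambda>p. axis p 1) ` S)"
proof
  show "vec.span ((\<lambda>p. axis p 1) ` S) \<subseteq> Zs S"
    by (rule vec.span_minimal[OF _ subspace_Zs]) (auto simp: Zs_def axis_def)
  show "Zs S \<subseteq> vec.span ((\<lambda>p. axis p 1) ` S)"
  proof
    fix w assume w: "w \<in> Zs S"
    have "w = (\<Sum>p\<in>S. w $ p *s axis p 1)"
    proof (subst vec_eq_iff, intro allI)
      fix j
      have "(\<Sum>p\<in>S. w $ p *s axis p 1) $ j = (\<Sum>p\<in>S. if p = j then w $ j else 0)"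
        unfolding sum_component by (intro sum.cong) (auto simp: axis_def)
      also have "\<dots> = w $ j" using w unfolding Zs_def by (cases j) auto
      finally show "w $ j = (\<Sum>p\<in>S. w $ p *s axis p 1) $ j" by simp
    qed
    also have "\<dots> \<in> vec.span ((\<lambda>p. axis p 1) ` S)"
      by (intro vec.span_sum vec.span_scale vec.span_base) auto
    finally show "w \<in> vec.span ((\<lambda>p. axis p 1) ` S)" .
  qed
qed

lemma dim_Zs: "vec.dim (Zs S :: ('a::field ^ ('n::finite \<times> 'n)) set) = card S"
proof -
  have ind: "vec.independent ((\<lambda>p. axis p (1::'a)) ` S)"
    by (rule vec.independent_mono[OF independent_cart_basis]) (auto simp: cart_basis_def)
  have "vec.dim (Zs S :: ('a ^ ('n \<times> 'n)) set) = card ((\<lambda>p. axis p (1::'a)) ` S)"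
    unfolding span_Zs by (rule vec.dim_span_eq_card_independent[OF ind])
  also have "\<dots> = card S" by (rule card_image) (auto simp: inj_on_def axis_eq_axis)
  finally show ?thesis .
qed

lemma sigma_wedge: "sigma (wedge u v) $ i $ j = u $ i * v $ j - u $ j * v $ i"
  by (auto simp: sigma_def wedge_def algebra_simps)



lemma dec_char:
  fixes w :: "'a::field ^ ('n::{finite,linorder} \<times> 'n)"
  assumes ab: "a < b" "b < c" and w: "w \<in> Zs (insert (b,c) (Pair a ` {a<..}))"
  shows "decomposable w \<longleftrightarrow> w \<noteq> 0 \<and> (w$(b,c) = 0 \<or> (\<forall>s. s \<noteq> b \<and> s \<noteq> c \<longrightarrow> w$(a,s) = 0))"
proof -
  have z: "\<And>r s. w $ (r,s) \<noteq> 0 \<Longrightarrow> (r = a \<and> a < s) \<or> (r = b \<and> s = c)"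
    using w by (auto simp: Zs_def)
  show ?thesis
  proof
    assume d: "decomposable w"
    then obtain u v where wuv: "w = wedge u v" and nz: "w \<noteq> 0" unfolding decomposable_def by blast
    show "w \<noteq> 0 \<and> (w$(b,c) = 0 \<or> (\<forall>s. s \<noteq> b \<and> s \<noteq> c \<longrightarrow> w$(a,s) = 0))"
    proof (rule ccontr)
      assume "\<not> ?thesis"
      with nz obtain s0 where t: "w$(b,c) \<noteq> 0" and s0: "s0 \<noteq> b" "s0 \<noteq> c" "w$(a,s0) \<noteq> 0" by blast
      have as0: "a < s0" using z[OF s0(3)] ab by auto
      define P where "P i j = u $ i * v $ j - u $ j * v $ i" for i j
      have Pw: "P i j = (if i < j then w $ (i,j) else if j < i then - w $ (j,i) else 0)" for i j
        using sigma_wedge[of u v i j] unfolding P_def wuv sigma_def by simp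
      have id: "P a s0 * P b c - P a b * P s0 c + P a c * P s0 b = 0"
        unfolding P_def by (simp add: algebra_simps)
      have "P s0 c = 0"
        unfolding Pw using z[of s0 c] z[of c s0] s0 as0 ab less_trans[OF ab] by (auto simp: not_less)
      moreover have "P s0 b = 0"
        unfolding Pw using z[of s0 b] z[of b s0] s0 as0 ab by (auto simp: not_less)
      moreover have "P a s0 = w $ (a,s0)" "P b c = w $ (b,c)" using Pw as0 ab by auto
      ultimately have "w $ (a,s0) * w $ (b,c) = 0" using id by simp
      then show False using t s0 by simp
    qed
  next
    assume h: "w \<noteq> 0 \<and> (w$(b,c) = 0 \<or> (\<forall>s. s \<noteq> b \<and> s \<noteq> c \<longrightarrow> w$(a,s) = 0))"
    then have nz: "w \<noteq> 0" by blast
    from h consider (t0) "w$(b,c) = 0" | (sup) "w$(b,c) \<noteq> 0" "\<forall>s. s \<noteq> b \<and> s \<noteq> c \<longrightarrow> w$(a,s) = 0"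
      by blast
    then show "decomposable w"
    proof cases
      case t0
      define v where "v = (\<chi> s. if a < s then w$(a,s) else (0::'a))"
      have "w = wedge (axis a 1) v"
      proof (subst vec_eq_iff, intro allI)
        fix p :: "'n \<times> 'n"
        obtain r s where p: "p = (r,s)" by fastforce
        show "w $ p = wedge (axis a 1) v $ p"
          using z[of r s] t0 ab unfolding p wedge_def v_def axis_def by auto
      qed
      then show ?thesis using nz unfolding decomposable_def by blast
    next
      case sup
      define t where "t = w$(b,c)"
      define x where "x = w$(a,b)"
      define y where "y = w$(a,c)"
      define u where "u = y *s axis a 1 + t *s axis b (1::'a)"
      define v where "v = (- x / t) *s axis a 1 + axis c (1::'a)"
      have "w = wedge u v"
      proof (subst vec_eq_iff, intro allI)
        fix p :: "'n \<times> 'n"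
        obtain r s where p: "p = (r,s)" by fastforce
        show "w $ p = wedge u v $ p"
          using z[of r s] sup ab unfolding p wedge_def u_def v_def axis_def t_def[symmetric] x_def y_def
          by (auto simp: t_def)
      qed
      then show ?thesis using nz unfolding decomposable_def by blast
    qed
  qed
qed



lemma subspace_coord0: "vec.subspace {y :: 'a::field ^ 'n. y $ j = 0}"
  by (auto simp: vec.subspace_def)

lemma span_coord0:
  assumes "\<forall>y\<in>S. y $ j = (0::'a::field)"
  shows "vec.span S \<subseteq> {y. y $ j = 0}"
  using assms by (intro vec.span_minimal[OF _ subspace_coord0]) auto

lemma rowi_test:
  fixes w :: "'a::field ^ ('n::{finite,linorder} \<times> 'n)"
  assumes ab: "a < b" "b < c"
  and z: "\<And>r s. w $ (r,s) \<noteq> 0 \<Longrightarrow> (r = a \<and> a < s) \<or> (r = b \<and> s = c)"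
  and i: "i \<noteq> a"
  shows "row i (sigma w) = (- w$(a,i)) *s axis a 1 + (if i = b then w$(b,c) *s axis c 1 else 0)
      - (if i = c then w$(b,c) *s axis b 1 else 0)"
proof (subst vec_eq_iff, intro allI)
  fix j
  have ac: "a < c" using ab by simp
  have L: "row i (sigma w) $ j = (if i < j then w $ (i,j) else if j < i then - w $ (j,i) else 0)"
    by (simp add: row_def sigma_def)
  have R: "((- w$(a,i)) *s axis a 1 + (if i = b then w$(b,c) *s axis c 1 else 0)
      - (if i = c then w$(b,c) *s axis b 1 else 0)) $ j
     = (if j = a then - w$(a,i) else 0) + (if i = b \<and> j = c then w$(b,c) else 0)
       - (if i = c \<and> j = b then w$(b,c) else 0)"
    by (cases "i = b"; cases "i = c"; simp add: axis_def)
  show "row i (sigma w) $ j = ((- w$(a,i)) *s axis a 1 + (if i = b then w$(b,c) *s axis c 1 else 0)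
      - (if i = c then w$(b,c) *s axis b 1 else 0)) $ j"
  proof (cases "i < j")
    case True
    have "w $ (i,j) = (if i = b \<and> j = c then w$(b,c) else 0)"
    proof (cases "i = b \<and> j = c")
      case True then show ?thesis by simp
    next
      case F: False
      have "w $ (i,j) = 0"
      proof (rule ccontr)
        assume "w $ (i,j) \<noteq> 0"
        from z[OF this] i F show False by blast
      qed
      then show ?thesis unfolding if_not_P[OF F] .
    qed
    moreover have "\<not> (i = c \<and> j = b)" using True ab by auto
    moreover have "w $ (a,i) = 0" if ja: "j = a"
    proof (rule ccontr)
      assume "w $ (a,i) \<noteq> 0"
      from z[OF this] have "a < i \<or> a = b \<and> i = c" by blast
      then show False using True ja ab by (auto dest: less_asym)
    qed
    ultimately show ?thesis unfolding L R using True by auto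
  next
    case False
    show ?thesis
    proof (cases "j < i")
      case True
      have nbc: "\<not> (i = b \<and> j = c)" using True ab by auto
      show ?thesis
      proof (cases "j = a")
        case ja: True
        have ncb: "\<not> (i = c \<and> j = b)" using ja ab by auto
        show ?thesis unfolding L R if_not_P[OF False] if_P[OF True] if_P[OF ja] if_not_P[OF nbc] if_not_P[OF ncb]
          unfolding ja by simp
      next
        case ja: False
        have wji: "w $ (j,i) = (if j = b \<and> i = c then w$(b,c) else 0)"
        proof (cases "j = b \<and> i = c")
          case True then show ?thesis by simp
        next
          case F: False
          have "w $ (j,i) = 0"
          proof (rule ccontr)
            assume "w $ (j,i) \<noteq> 0"
            from z[OF this] F ja show False by blast
          qed
          then show ?thesis unfolding if_not_P[OF F] .
        qed
        show ?thesis
        proof (cases "j = b \<and> i = c")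
          case jb: True
          have icb: "i = c \<and> j = b" using jb by simp
          show ?thesis unfolding L R if_not_P[OF False] if_P[OF True] if_not_P[OF ja] if_not_P[OF nbc] if_P[OF icb]
            wji if_P[OF jb] by simp
        next
          case jb: False
          have icb: "\<not> (i = c \<and> j = b)" using jb by blast
          show ?thesis unfolding L R if_not_P[OF False] if_P[OF True] if_not_P[OF ja] if_not_P[OF nbc] if_not_P[OF icb]
            wji if_not_P[OF jb] by simp
        qed
      qed
    next
      case F2: False
      then have ji: "j = i" using False by auto
      have n1: "\<not> (i = b \<and> i = c)" "\<not> (i = c \<and> i = b)" using ab by auto
      show ?thesis unfolding L R unfolding ji if_not_P[OF i] if_not_P[OF n1(1)] if_not_P[OF n1(2)] by simp
    qed
  qed
qed

lemma rank4:
  fixes w :: "'a::field ^ ('n::{finite,linorder} \<times> 'n)"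
  assumes ab: "a < b" "b < c" and w: "w \<in> Zs (insert (b,c) (Pair a ` {a<..}))"
    and t: "w$(b,c) \<noteq> 0" and s0: "s0 \<noteq> b" "s0 \<noteq> c" "w$(a,s0) \<noteq> 0"
  shows "wrank w = 4"
proof -
  have z: "\<And>r s. w $ (r,s) \<noteq> 0 \<Longrightarrow> (r = a \<and> a < s) \<or> (r = b \<and> s = c)"
    using w by (auto simp: Zs_def)
  have ac: "a < c" using ab by auto
  have as0: "a < s0" using z[OF s0(3)] ab by auto
  define M where "M = sigma w"
  define x where "x = row a M"
  define ea where "ea = axis a (1::'a)"
  define eb where "eb = axis b (1::'a)"
  define ec where "ec = axis c (1::'a)"
  have rowi: "row i M = (- w$(a,i)) *s ea + (if i = b then w$(b,c) *s ec else 0)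
      - (if i = c then w$(b,c) *s eb else 0)" if "i \<noteq> a" for i
    using rowi_test[OF ab z that] unfolding M_def ea_def eb_def ec_def .
  have xs0: "x $ s0 = w $ (a,s0)" unfolding x_def row_def M_def sigma_def using as0 by simp
  have xa: "x $ a = 0" unfolding x_def row_def M_def sigma_def by simp
  define T where "T = {x, ea, eb, ec}"
  have inrows: "row i M \<in> rows M" for i unfolding rows_def by blast
  have sub1: "rows M \<subseteq> vec.span T"
  proof
    fix r assume "r \<in> rows M"
    then obtain i where r: "r = row i M" unfolding rows_def by blast
    show "r \<in> vec.span T"
    proof (cases "i = a")
      case True then show ?thesis unfolding r T_def x_def by (intro vec.span_base) auto
    next
      case False
      have "ea \<in> vec.span T" "eb \<in> vec.span T" "ec \<in> vec.span T"
        unfolding T_def by (auto intro: vec.span_base)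
      then show ?thesis unfolding r rowi[OF False]
        by (intro vec.span_add vec.span_diff vec.span_scale) (auto intro: vec.span_zero vec.span_scale)
    qed
  qed
  have s0a: "s0 \<noteq> a" using as0 by simp
  have ba: "b \<noteq> a" and ca: "c \<noteq> a" and bc: "b \<noteq> c" using ab ac by auto
  have ea_eq: "ea = (- 1 / w$(a,s0)) *s row s0 M"
    unfolding rowi[OF s0a] using s0 by (simp add: vec_eq_iff ea_def)
  have ec_eq: "ec = (1 / w$(b,c)) *s (row b M + w$(a,b) *s ea)"
    unfolding rowi[OF ba] using t bc by (simp add: vec_eq_iff ea_def ec_def axis_def)
  have eb_eq: "eb = (- 1 / w$(b,c)) *s (row c M + w$(a,c) *s ea)"
    unfolding rowi[OF ca] using t bc by (simp add: vec_eq_iff ea_def eb_def axis_def)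
  have ea_in: "ea \<in> vec.span (rows M)"
    unfolding ea_eq by (intro vec.span_scale vec.span_base inrows)
  have sub2: "T \<subseteq> vec.span (rows M)"
  proof -
    have "x \<in> vec.span (rows M)" unfolding x_def by (intro vec.span_base inrows)
    moreover have "ec \<in> vec.span (rows M)" unfolding ec_eq
      by (intro vec.span_scale vec.span_add vec.span_base inrows ea_in)
    moreover have "eb \<in> vec.span (rows M)" unfolding eb_eq
      by (intro vec.span_scale vec.span_add vec.span_base inrows ea_in)
    ultimately show ?thesis unfolding T_def using ea_in by auto
  qed
  have spaneq: "vec.span (rows M) = vec.span T"
    using sub1 sub2 vec.span_eq by blast
  have i1: "vec.independent {ec}"
    by (rule vec.independent_insertI) (auto simp: ec_def vec.span_empty vec_eq_iff axis_def vec.independent_empty)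
  have i2: "vec.independent {eb, ec}"
  proof (rule vec.independent_insertI[OF _ i1])
    have "vec.span {ec} \<subseteq> {y. y $ b = 0}" by (rule span_coord0) (use bc in \<open>auto simp: ec_def axis_def\<close>)
    then show "eb \<notin> vec.span {ec}" unfolding eb_def by auto
  qed
  have i3: "vec.independent {ea, eb, ec}"
  proof (rule vec.independent_insertI[OF _ i2])
    have "vec.span {eb, ec} \<subseteq> {y. y $ a = 0}" by (rule span_coord0) (use ba ca in \<open>auto simp: eb_def ec_def axis_def\<close>)
    then show "ea \<notin> vec.span {eb, ec}" unfolding ea_def by auto
  qed
  have i4: "vec.independent T"
    unfolding T_def
  proof (rule vec.independent_insertI[OF _ i3])
    have "vec.span {ea, eb, ec} \<subseteq> {y. y $ s0 = 0}"
      by (rule span_coord0) (use s0 s0a in \<open>auto simp: ea_def eb_def ec_def axis_def\<close>)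
    then show "x \<notin> vec.span {ea, eb, ec}" using xs0 s0 by auto
  qed
  have cardT: "card T = 4"
  proof -
    have "x \<noteq> ea" using xa by (metis axis_nth ea_def zero_neq_one)
    moreover have "eb $ s0 = 0" "ec $ s0 = 0" using s0 by (simp_all add: eb_def ec_def axis_def)
    then have "x \<noteq> eb" "x \<noteq> ec" using xs0 s0(3) by metis+
    moreover have "ea \<noteq> eb" "ea \<noteq> ec" "eb \<noteq> ec" using ba ca bc by (auto simp: ea_def eb_def ec_def axis_eq_axis)
    ultimately show ?thesis unfolding T_def by simp
  qed
  have "wrank w = vec.dim (rows M)" unfolding wrank_def row_rank_def_gen M_def ..
  also have "\<dots> = vec.dim (vec.span (rows M))" by simp
  also have "\<dots> = vec.dim (vec.span T)" by (simp only: spaneq)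
  also have "\<dots> = card T" by (rule vec.dim_span_eq_card_independent[OF i4])
  finally show ?thesis using cardT by simp
qed



lemma arith_aux:
  fixes q Q :: nat
  assumes "q \<ge> 1" "q^2 \<le> Q"
  shows "q*Q - 1 - ((Q - 1) + q^2*(q-1)) = (Q - q^2)*(q-1)"
proof -
  obtain k where k: "q = k + 1" using assms(1) by (metis add.commute le_Suc_ex)
  obtain R where R: "Q = q^2 + R" using assms(2) le_Suc_ex by blast
  show ?thesis unfolding R k by (simp add: algebra_simps power2_eq_square)
qed

lemma cube_aux: "(q::nat)^3 - q^2 = q^2 * (q - 1)"
  by (simp add: diff_mult_distrib2 power2_eq_square power3_eq_cube)

theorem lemma6p5:
  fixes q m \<mu> :: nat
  assumes "q = CARD('a::{finite,field})"
    and "m = CARD('n::{finite,linorder})"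
    and "m > 4"
    and "\<mu> = m - 1"
  shows "\<exists>W :: ('a ^ ('n \<times> 'n)) set.
           W \<subseteq> wedge2 \<and> vec.subspace W \<and> vec.dim W = \<mu> + 1 \<and>
           card {w \<in> W. decomposable w} = (q ^ \<mu> - 1) + q\<^sup>2 * (q - 1) \<and>
           card {w \<in> W. w \<noteq> 0 \<and> \<not> decomposable w} = (q ^ \<mu> - q\<^sup>2) * (q - 1) \<and>
           (\<forall>w \<in> W. w \<noteq> 0 \<and> \<not> decomposable w \<longrightarrow> wrank w = 4)"
proof -
  define a :: 'n where "a = Min UNIV"
  define b :: 'n where "b = Min (UNIV - {a})"
  define c :: 'n where "c = Min (UNIV - {a, b})"
  have amin: "a \<le> s" for s unfolding a_def by simp
  have ne1: "UNIV - {a} \<noteq> {}"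
  proof
    assume "UNIV - {a} = {}" then have "(UNIV::'n set) = {a}" by auto
    then have "card (UNIV::'n set) = card {a}" by (rule arg_cong)
    then have "card (UNIV::'n set) = 1" by simp
    then show False using assms(2,3) by simp
  qed
  have ne2: "UNIV - {a, b} \<noteq> {}"
  proof
    assume "UNIV - {a, b} = {}" then have "(UNIV::'n set) \<subseteq> {a, b}" by auto
    then have "card (UNIV::'n set) \<le> card {a, b}" by (intro card_mono) auto
    also have "\<dots> \<le> 2" by (rule card_insert_le_m1) auto
    finally show False using assms(2,3) by simp
  qed
  have bin: "b \<in> UNIV - {a}" unfolding b_def using ne1 by (intro Min_in) auto
  have cin: "c \<in> UNIV - {a, b}" unfolding c_def using ne2 by (intro Min_in) auto
  have ab: "a < b" using amin[of b] bin by (auto simp: order.order_iff_strict)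
  have bmin: "s \<noteq> a \<Longrightarrow> b \<le> s" for s unfolding b_def by (intro Min_le) auto
  have bc: "b < c" using bmin[of c] cin by (auto simp: order.order_iff_strict)
  have ac: "a < c" using ab bc by simp
  define S0 where "S0 = Pair a ` {a<..}"
  define SW where "SW = insert (b,c) S0"
  define S3 where "S3 = {(a,b),(a,c),(b,c)}"
  define S2 where "S2 = {(a,b),(a,c)}"
  define W :: "('a ^ ('n \<times> 'n)) set" where "W = Zs SW"
  have gt: "{a<..} = UNIV - {a}" using amin by (auto simp: order.order_iff_strict)
  have cS0: "card S0 = m - 1" unfolding S0_def
    by (subst card_image) (auto simp: inj_on_def gt assms(2))
  have bcS0: "(b,c) \<notin> S0" using ab unfolding S0_def by auto
  have cSW: "card SW = \<mu> + 1" unfolding SW_def using bcS0 cS0 assms by simp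
  have neqs: "a \<noteq> b" "b \<noteq> c" "a \<noteq> c" using ab bc ac by auto
  have cS3: "card S3 = 3" unfolding S3_def using neqs by simp
  have cS2: "card S2 = 2" unfolding S2_def using neqs by simp
  have Wz: "\<And>w r s. w \<in> W \<Longrightarrow> w $ (r,s) \<noteq> 0 \<Longrightarrow> (r = a \<and> a < s) \<or> (r = b \<and> s = c)"
    unfolding W_def SW_def S0_def Zs_def by auto
  have WW: "W = Zs (insert (b,c) (Pair a ` {a<..}))" unfolding W_def SW_def S0_def ..
  have sub: "W \<subseteq> wedge2"
  proof
    fix w assume w: "w \<in> W"
    have "w $ (r,s) = 0" if rs: "\<not> r < s" for r s
    proof (rule ccontr)
      assume "w $ (r,s) \<noteq> 0"
      from Wz[OF w this] rs bc show False by auto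
    qed
    then show "w \<in> wedge2" unfolding wedge2_def by simp
  qed
  have q2: "q \<ge> 2"
  proof -
    have "card {0::'a, 1} \<le> card (UNIV :: 'a set)" by (intro card_mono) auto
    then show ?thesis using assms(1) by simp
  qed
  define D where "D = {w \<in> W. decomposable w}"
  have S0W: "Zs S0 \<subseteq> W" unfolding W_def SW_def Zs_def by auto
  have S3W: "Zs S3 \<subseteq> W" unfolding W_def SW_def S3_def S0_def Zs_def using ab ac by auto
  have S23: "Zs S2 \<subseteq> Zs S3" unfolding S2_def S3_def Zs_def by auto
  have inS0: "w \<in> Zs S0 \<longleftrightarrow> w $ (b,c) = 0" if "w \<in> W" for w
  proof
    assume "w \<in> Zs S0" then show "w $ (b,c) = 0" using bcS0 unfolding Zs_def by blast
  next
    assume h: "w $ (b,c) = 0"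
    show "w \<in> Zs S0" unfolding Zs_def
    proof (intro CollectI allI impI)
      fix p assume p: "p \<notin> S0"
      obtain r s where rs: "p = (r,s)" by fastforce
      show "w $ p = 0"
      proof (rule ccontr)
        assume nz: "w $ p \<noteq> 0"
        from Wz[OF that nz[unfolded rs]] nz p h rs show False unfolding S0_def by auto
      qed
    qed
  qed
  have inS3: "w \<in> Zs S3 \<longleftrightarrow> (\<forall>s. s \<noteq> b \<and> s \<noteq> c \<longrightarrow> w$(a,s) = 0)" if "w \<in> W" for w
  proof
    assume "w \<in> Zs S3" then show "\<forall>s. s \<noteq> b \<and> s \<noteq> c \<longrightarrow> w$(a,s) = 0"
      unfolding Zs_def S3_def using neqs by auto
  next
    assume h: "\<forall>s. s \<noteq> b \<and> s \<noteq> c \<longrightarrow> w$(a,s) = 0"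
    show "w \<in> Zs S3" unfolding Zs_def
    proof (intro CollectI allI impI)
      fix p assume p: "p \<notin> S3"
      obtain r s where rs: "p = (r,s)" by fastforce
      show "w $ p = 0"
      proof (rule ccontr)
        assume nz: "w $ p \<noteq> 0"
        from Wz[OF that nz[unfolded rs]] nz p h rs show False unfolding S3_def by auto
      qed
    qed
  qed
  have inS2: "w \<in> Zs S2 \<longleftrightarrow> w $ (b,c) = 0" if "w \<in> Zs S3" for w
    using that neqs unfolding Zs_def S3_def S2_def by auto
  have Deq: "D = (Zs S0 - {0}) \<union> (Zs S3 - Zs S2)"
  proof (rule set_eqI)
    fix w
    show "w \<in> D \<longleftrightarrow> w \<in> (Zs S0 - {0}) \<union> (Zs S3 - Zs S2)"
    proof (cases "w \<in> W")
      case True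
      have nz: "w $ (b,c) \<noteq> 0 \<Longrightarrow> w \<noteq> 0" by auto
      show ?thesis
      proof (cases "w \<in> Zs S3")
        case T3: True
        show ?thesis
          unfolding D_def using True dec_char[OF ab bc True[unfolded WW]] inS0[OF True] inS3[OF True]
          inS2[OF T3] T3 nz by auto
      next
        case F3: False
        show ?thesis
          unfolding D_def using True dec_char[OF ab bc True[unfolded WW]] inS0[OF True] inS3[OF True]
          F3 by auto
      qed
    next
      case False then show ?thesis unfolding D_def using S0W S3W by auto
    qed
  qed
  have disj: "(Zs S0 - {0}) \<inter> (Zs S3 - Zs S2) = ({} :: ('a ^ ('n \<times> 'n)) set)"
  proof -
    have "x \<in> Zs S2" if "x \<in> Zs S0" "x \<in> Zs S3" for x :: "'a ^ ('n \<times> 'n)"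
      using inS0[of x] inS2[of x] S0W that by blast
    then show ?thesis by blast
  qed
  have c1: "card (Zs S0 - {0} :: ('a ^ ('n \<times> 'n)) set) = q ^ \<mu> - 1"
  proof -
    have z0: "(0::'a ^ ('n \<times> 'n)) \<in> Zs S0" by (simp add: Zs_def)
    have "card (Zs S0 - {0} :: ('a ^ ('n \<times> 'n)) set) = card (Zs S0 :: ('a ^ ('n \<times> 'n)) set) - 1"
      using z0 by (simp add: card_Diff_singleton)
    then show ?thesis using card_Zs[of S0, where 'a='a] cS0 assms(1,4) by simp
  qed
  have c2: "card (Zs S3 - Zs S2 :: ('a ^ ('n \<times> 'n)) set) = q^2 * (q - 1)"
  proof -
    have "card (Zs S3 - Zs S2 :: ('a ^ ('n \<times> 'n)) set) = card (Zs S3 :: ('a ^ ('n \<times> 'n)) set) - card (Zs S2 :: ('a ^ ('n \<times> 'n)) set)"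
      by (rule card_Diff_subset) (simp_all add: S23)
    then show ?thesis using card_Zs[of S3, where 'a='a] card_Zs[of S2, where 'a='a] cS3 cS2 assms(1)
      by (simp add: cube_aux)
  qed
  have cD: "card D = (q ^ \<mu> - 1) + q^2 * (q - 1)"
    unfolding Deq using disj c1 c2 by (simp add: card_Un_disjoint)
  have Neq: "{w \<in> W. w \<noteq> 0 \<and> \<not> decomposable w} = W - insert 0 D"
    unfolding D_def decomposable_def by auto
  have 0: "0 \<notin> D" "0 \<in> W" unfolding D_def decomposable_def W_def Zs_def by auto
  have DW: "insert 0 D \<subseteq> W" using 0 unfolding D_def by auto
  have cW: "card W = q * q ^ \<mu>"
    unfolding W_def card_Zs cSW assms(1) by simp
  have cN: "card {w \<in> W. w \<noteq> 0 \<and> \<not> decomposable w} = (q ^ \<mu> - q^2) * (q - 1)"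
  proof -
    have "card {w \<in> W. w \<noteq> 0 \<and> \<not> decomposable w} = card W - (card D + 1)"
      unfolding Neq using DW 0 by (simp add: card_Diff_subset finite_subset[OF DW])
    also have "\<dots> = q * q ^ \<mu> - 1 - ((q ^ \<mu> - 1) + q^2 * (q - 1))" unfolding cW cD by simp
    also have "\<dots> = (q ^ \<mu> - q^2) * (q - 1)"
    proof (rule arith_aux)
      show "q \<ge> 1" using q2 by simp
      show "q^2 \<le> q ^ \<mu>" using q2 assms(3,4) by (intro power_increasing) auto
    qed
    finally show ?thesis .
  qed
  have rk: "\<forall>w \<in> W. w \<noteq> 0 \<and> \<not> decomposable w \<longrightarrow> wrank w = 4"
  proof (intro ballI impI)
    fix w assume w: "w \<in> W" and h: "w \<noteq> 0 \<and> \<not> decomposable w"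
    then have "w$(b,c) \<noteq> 0 \<and> (\<exists>s. s \<noteq> b \<and> s \<noteq> c \<and> w$(a,s) \<noteq> 0)"
      using dec_char[OF ab bc w[unfolded WW]] by blast
    then obtain s0 where "w$(b,c) \<noteq> 0" "s0 \<noteq> b" "s0 \<noteq> c" "w$(a,s0) \<noteq> 0" by blast
    then show "wrank w = 4" using rank4[OF ab bc w[unfolded WW]] by blast
  qed
  show ?thesis
    by (rule exI[of _ W]) (use sub cD cN rk cSW in \<open>auto simp: D_def W_def subspace_Zs dim_Zs\<close>)
qed

end
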